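(* For a negative game $A$, let $!A$ be the infinitary parallel composition of countably many copies of $A$, i.e. the event structure whose events are the pairs $(i,a)$ with $i \in \omega$ and $a \in A$, with causal order, conflict and polarity inherited componentwise from $A$ (and no causality or conflict between distinct copies). Equip $!A$ with the groups \begin{align*} \mathcal{N}_{!A} &= \{ (\pi, (\alpha_i)_{i\in \omega}) \mid \pi \text{ is a permutation of $\omega$, and } \alpha_i \in \mathcal{N}_A \text{ for all }i \in \omega \} \\ \mathcal{P}_{!A} &= \{ (\alpha_i)_{i \in \omega} \mid \alpha_i \in \mathcal{P}_A \text{ for all }i \in \omega \} \end{align*} under componentwise multiplication, with actions on $!A$ defined by \begin{align*} \mathit{act}_{\mathcal{N}}((\pi, (\alpha_i)_{i\in \omega}), (i, a)) &= (\pi(i), \alpha_i(a)) \\ \mathit{act}_{\mathcal{P}}((\alpha_i)_{i\in \omega}, (i, a)) &= (i, \alpha_i(a)) \end{align*} and distributive law \begin{align*} \lambda_{!A} : \mathcal{N}_{!A} \times \mathcal{P}_{!A} &\longrightarrow \mathcal{P}_{!A} \times \mathcal{N}_{!A} \\ ((\pi, (\alpha_i)_{i \in \omega}), (\beta_i)_{i \in \omega}) &\longmapsto \left(\left(\beta'_{\pi^{-1}(i)}\right)_{i \in \omega}, (\pi, (\alpha'_i)_{i \in \omega})\right) \end{align*} where for every $i \in \omega$, $(\beta'_i, \alpha'_i) = \lambda_A(\alpha_i, \beta_i).$ This satisfies the axioms for a game.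
   Context: An event structure (with polarity) is a partial order $(A,\leq)$ with finitely many predecessors for each element, a polarity function $A \to \{-,+\}$, and an irreflexive symmetric hereditary conflict relation. An automorphism $\alpha$ of $A$ is negative if whenever $\alpha$ fixes a configuration $x$ and $x \subseteq^+ y$ (extension by positive events only) then $\alpha$ fixes $y$; positive is defined dually with $\subseteq^-$. A game is an event structure $A$ equipped with a group $\mathcal{N}_A$ with a negative left action $\mathit{act}_{\mathcal{N}}$ on $A$, a group $\mathcal{P}_A$ with a positive left action $\mathit{act}_{\mathcal{P}}$ on $A$, and a distributive law $\lambda_A : \mathcal{N}_A \times \mathcal{P}_A \to \mathcal{P}_A \times \mathcal{N}_A$ between the monads $\mathcal{N}_A \times (-)$ and $\mathcal{P}_A \times (-)$ on Set, such that acting by $\beta$ then by $\alpha$ equals acting by the result of applying $\lambda_A$ to $(\alpha,\beta)$ (i.e. the two actions are permuted by $\lambda_A$). A game is negative if all its initial (minimal) moves are negative. $!A$ denotes the resource modality (exponential). *)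

theory Defs
  imports "HOL-Algebra.Group"
begin

record 'a evs =
  ev  :: "'a set"
  leq :: "'a \<Rightarrow> 'a \<Rightarrow> bool"
  cfl :: "'a \<Rightarrow> 'a \<Rightarrow> bool"
  pos :: "'a \<Rightarrow> bool"

definition event_structure :: "('a, 'z) evs_scheme \<Rightarrow> bool" where
  "event_structure A \<longleftrightarrow>
     (\<forall>a\<in>ev A. leq A a a) \<and>
     (\<forall>a\<in>ev A. \<forall>b\<in>ev A. leq A a b \<and> leq A b a \<longrightarrow> a = b) \<and>
     (\<forall>a\<in>ev A. \<forall>b\<in>ev A. \<forall>c\<in>ev A. leq A a b \<and> leq A b c \<longrightarrow> leq A a c) \<and>
     (\<forall>a\<in>ev A. finite {b\<in>ev A. leq A b a}) \<and>
     (\<forall>a\<in>ev A. \<not> cfl A a a) \<and>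
     (\<forall>a\<in>ev A. \<forall>b\<in>ev A. cfl A a b \<longrightarrow> cfl A b a) \<and>
     (\<forall>a\<in>ev A. \<forall>b\<in>ev A. \<forall>c\<in>ev A. cfl A a b \<and> leq A b c \<longrightarrow> cfl A a c)"

definition config :: "('a, 'z) evs_scheme \<Rightarrow> 'a set \<Rightarrow> bool" where
  "config A x \<longleftrightarrow> x \<subseteq> ev A \<and> finite x \<and>
     (\<forall>a\<in>x. \<forall>b\<in>ev A. leq A b a \<longrightarrow> b \<in> x) \<and>
     (\<forall>a\<in>x. \<forall>b\<in>x. \<not> cfl A a b)"

definition ext_pos :: "('a, 'z) evs_scheme \<Rightarrow> 'a set \<Rightarrow> 'a set \<Rightarrow> bool" where
  "ext_pos A x y \<longleftrightarrow> config A x \<and> config A y \<and> x \<subseteq> y \<and> (\<forall>e\<in>y - x. pos A e)"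

definition ext_neg :: "('a, 'z) evs_scheme \<Rightarrow> 'a set \<Rightarrow> 'a set \<Rightarrow> bool" where
  "ext_neg A x y \<longleftrightarrow> config A x \<and> config A y \<and> x \<subseteq> y \<and> (\<forall>e\<in>y - x. \<not> pos A e)"

definition automorphism :: "('a, 'z) evs_scheme \<Rightarrow> ('a \<Rightarrow> 'a) \<Rightarrow> bool" where
  "automorphism A f \<longleftrightarrow> bij_betw f (ev A) (ev A) \<and>
     (\<forall>a\<in>ev A. \<forall>b\<in>ev A. leq A (f a) (f b) \<longleftrightarrow> leq A a b) \<and>
     (\<forall>a\<in>ev A. \<forall>b\<in>ev A. cfl A (f a) (f b) \<longleftrightarrow> cfl A a b) \<and>
     (\<forall>a\<in>ev A. pos A (f a) \<longleftrightarrow> pos A a)"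

definition fixes_conf :: "('a \<Rightarrow> 'a) \<Rightarrow> 'a set \<Rightarrow> bool" where
  "fixes_conf f x \<longleftrightarrow> (\<forall>e\<in>x. f e = e)"

definition negative_aut :: "('a, 'z) evs_scheme \<Rightarrow> ('a \<Rightarrow> 'a) \<Rightarrow> bool" where
  "negative_aut A f \<longleftrightarrow> automorphism A f \<and>
     (\<forall>x y. config A x \<and> fixes_conf f x \<and> ext_pos A x y \<longrightarrow> fixes_conf f y)"

definition positive_aut :: "('a, 'z) evs_scheme \<Rightarrow> ('a \<Rightarrow> 'a) \<Rightarrow> bool" where
  "positive_aut A f \<longleftrightarrow> automorphism A f \<and>
     (\<forall>x y. config A x \<and> fixes_conf f x \<and> ext_neg A x y \<longrightarrow> fixes_conf f y)"

definition left_action ::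
  "('g, 'b) monoid_scheme \<Rightarrow> ('a, 'z) evs_scheme \<Rightarrow> ('g \<Rightarrow> 'a \<Rightarrow> 'a) \<Rightarrow> bool" where
  "left_action G A act \<longleftrightarrow>
     (\<forall>g\<in>carrier G. automorphism A (act g)) \<and>
     (\<forall>a\<in>ev A. act (one G) a = a) \<and>
     (\<forall>g\<in>carrier G. \<forall>h\<in>carrier G. \<forall>a\<in>ev A. act (mult G g h) a = act g (act h a))"

definition negative_action ::
  "('g, 'b) monoid_scheme \<Rightarrow> ('a, 'z) evs_scheme \<Rightarrow> ('g \<Rightarrow> 'a \<Rightarrow> 'a) \<Rightarrow> bool" where
  "negative_action G A act \<longleftrightarrow> left_action G A act \<and> (\<forall>g\<in>carrier G. negative_aut A (act g))"

definition positive_action ::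
  "('g, 'b) monoid_scheme \<Rightarrow> ('a, 'z) evs_scheme \<Rightarrow> ('g \<Rightarrow> 'a \<Rightarrow> 'a) \<Rightarrow> bool" where
  "positive_action G A act \<longleftrightarrow> left_action G A act \<and> (\<forall>g\<in>carrier G. positive_aut A (act g))"

text \<open>A distributive law N\<times>(P\<times>-) \<Rightarrow> P\<times>(N\<times>-) between the monads N\<times>(-) and P\<times>(-) on Set,
  given (by naturality) by a function lam : N \<times> P \<rightarrow> P \<times> N; the four axioms are the
  unit and multiplication laws of a distributive law.\<close>
definition distr_law ::
  "('n, 'b) monoid_scheme \<Rightarrow> ('p, 'c) monoid_scheme \<Rightarrow> ('n \<times> 'p \<Rightarrow> 'p \<times> 'n) \<Rightarrow> bool" where
  "distr_law N P lam \<longleftrightarrow>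
     (\<forall>\<alpha>\<in>carrier N. \<forall>\<beta>\<in>carrier P.
        fst (lam (\<alpha>, \<beta>)) \<in> carrier P \<and> snd (lam (\<alpha>, \<beta>)) \<in> carrier N) \<and>
     (\<forall>\<alpha>\<in>carrier N. lam (\<alpha>, one P) = (one P, \<alpha>)) \<and>
     (\<forall>\<beta>\<in>carrier P. lam (one N, \<beta>) = (\<beta>, one N)) \<and>
     (\<forall>\<alpha>\<in>carrier N. \<forall>\<alpha>'\<in>carrier N. \<forall>\<beta>\<in>carrier P.
        lam (mult N \<alpha> \<alpha>', \<beta>) =
          (let (\<beta>1, \<alpha>1) = lam (\<alpha>', \<beta>); (\<beta>2, \<alpha>2) = lam (\<alpha>, \<beta>1) in (\<beta>2, mult N \<alpha>2 \<alpha>1))) \<and>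
     (\<forall>\<alpha>\<in>carrier N. \<forall>\<beta>\<in>carrier P. \<forall>\<beta>'\<in>carrier P.
        lam (\<alpha>, mult P \<beta> \<beta>') =
          (let (\<beta>1, \<alpha>1) = lam (\<alpha>, \<beta>); (\<beta>2, \<alpha>2) = lam (\<alpha>1, \<beta>') in (mult P \<beta>1 \<beta>2, \<alpha>2)))"

definition game ::
  "('a, 'z) evs_scheme \<Rightarrow> ('n, 'b) monoid_scheme \<Rightarrow> ('n \<Rightarrow> 'a \<Rightarrow> 'a)
     \<Rightarrow> ('p, 'c) monoid_scheme \<Rightarrow> ('p \<Rightarrow> 'a \<Rightarrow> 'a) \<Rightarrow> ('n \<times> 'p \<Rightarrow> 'p \<times> 'n) \<Rightarrow> bool" where
  "game A N actN P actP lam \<longleftrightarrow>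
     event_structure A \<and> group N \<and> group P \<and>
     negative_action N A actN \<and> positive_action P A actP \<and>
     distr_law N P lam \<and>
     (\<forall>\<alpha>\<in>carrier N. \<forall>\<beta>\<in>carrier P. \<forall>a\<in>ev A.
        actN \<alpha> (actP \<beta> a) = actP (fst (lam (\<alpha>, \<beta>))) (actN (snd (lam (\<alpha>, \<beta>))) a))"

definition negative_game ::
  "('a, 'z) evs_scheme \<Rightarrow> ('n, 'b) monoid_scheme \<Rightarrow> ('n \<Rightarrow> 'a \<Rightarrow> 'a)
     \<Rightarrow> ('p, 'c) monoid_scheme \<Rightarrow> ('p \<Rightarrow> 'a \<Rightarrow> 'a) \<Rightarrow> ('n \<times> 'p \<Rightarrow> 'p \<times> 'n) \<Rightarrow> bool" where
  "negative_game A N actN P actP lam \<longleftrightarrow> game A N actN P actP lam \<and>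
     (\<forall>a\<in>ev A. (\<forall>b\<in>ev A. leq A b a \<longrightarrow> b = a) \<longrightarrow> \<not> pos A a)"

definition bang_es :: "('a, 'z) evs_scheme \<Rightarrow> (nat \<times> 'a) evs" where
  "bang_es A = \<lparr> ev = UNIV \<times> ev A,
                 leq = (\<lambda>(i, a) (j, b). i = j \<and> leq A a b),
                 cfl = (\<lambda>(i, a) (j, b). i = j \<and> cfl A a b),
                 pos = (\<lambda>(i, a). pos A a) \<rparr>"

text \<open>N of !A: pairs (permutation of omega, family in N_A); the multiplication is the one
  making act_N a left action (wreath product).\<close>
definition bang_N :: "('n, 'b) monoid_scheme \<Rightarrow> ((nat \<Rightarrow> nat) \<times> (nat \<Rightarrow> 'n)) monoid" where
  "bang_N N = \<lparr> carrier = {(\<pi>, \<alpha>). bij \<pi> \<and> (\<forall>i. \<alpha> i \<in> carrier N)},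
                mult = (\<lambda>(\<pi>, \<alpha>) (\<pi>', \<alpha>'). (\<pi> \<circ> \<pi>', \<lambda>i. mult N (\<alpha> (\<pi>' i)) (\<alpha>' i))),
                one = (id, \<lambda>i. one N) \<rparr>"

definition bang_P :: "('p, 'c) monoid_scheme \<Rightarrow> (nat \<Rightarrow> 'p) monoid" where
  "bang_P P = \<lparr> carrier = {\<beta>. \<forall>i. \<beta> i \<in> carrier P},
                mult = (\<lambda>\<beta> \<beta>'. \<lambda>i. mult P (\<beta> i) (\<beta>' i)),
                one = (\<lambda>i. one P) \<rparr>"

definition bang_actN :: "('n \<Rightarrow> 'a \<Rightarrow> 'a) \<Rightarrow> (nat \<Rightarrow> nat) \<times> (nat \<Rightarrow> 'n) \<Rightarrow> nat \<times> 'a \<Rightarrow> nat \<times> 'a" where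
  "bang_actN actN = (\<lambda>(\<pi>, \<alpha>) (i, a). (\<pi> i, actN (\<alpha> i) a))"

definition bang_actP :: "('p \<Rightarrow> 'a \<Rightarrow> 'a) \<Rightarrow> (nat \<Rightarrow> 'p) \<Rightarrow> nat \<times> 'a \<Rightarrow> nat \<times> 'a" where
  "bang_actP actP = (\<lambda>\<beta> (i, a). (i, actP (\<beta> i) a))"

definition bang_lam :: "('n \<times> 'p \<Rightarrow> 'p \<times> 'n)
    \<Rightarrow> ((nat \<Rightarrow> nat) \<times> (nat \<Rightarrow> 'n)) \<times> (nat \<Rightarrow> 'p) \<Rightarrow> (nat \<Rightarrow> 'p) \<times> ((nat \<Rightarrow> nat) \<times> (nat \<Rightarrow> 'n))" where
  "bang_lam lam = (\<lambda>((\<pi>, \<alpha>), \<beta>).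
      ((\<lambda>i. fst (lam (\<alpha> (inv_into UNIV \<pi> i), \<beta> (inv_into UNIV \<pi> i)))),
       (\<pi>, (\<lambda>i. snd (lam (\<alpha> i, \<beta> i))))))"

end

theory Submission
  imports Defs
begin

lemma bang_simps[simp]:
  "ev (bang_es A) = UNIV \<times> ev A"
  "leq (bang_es A) (i, a) (j, b) = (i = j \<and> leq A a b)"
  "cfl (bang_es A) (i, a) (j, b) = (i = j \<and> cfl A a b)"
  "pos (bang_es A) (i, a) = pos A a"
  by (simp_all add: bang_es_def)

lemma bang_N_simps[simp]:
  "carrier (bang_N N) = {(\<pi>, \<alpha>). bij \<pi> \<and> (\<forall>i. \<alpha> i \<in> carrier N)}"
  "mult (bang_N N) (\<pi>, \<alpha>) (\<pi>', \<alpha>') = (\<pi> \<circ> \<pi>', \<lambda>i. mult N (\<alpha> (\<pi>' i)) (\<alpha>' i))"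
  "one (bang_N N) = (id, \<lambda>i. one N)"
  by (simp_all add: bang_N_def)

lemma bang_P_simps[simp]:
  "carrier (bang_P P) = {\<beta>. \<forall>i. \<beta> i \<in> carrier P}"
  "mult (bang_P P) \<beta> \<beta>' = (\<lambda>i. mult P (\<beta> i) (\<beta>' i))"
  "one (bang_P P) = (\<lambda>i. one P)"
  by (simp_all add: bang_P_def)

lemma bang_actN_simp[simp]: "bang_actN actN (\<pi>, \<alpha>) (i, a) = (\<pi> i, actN (\<alpha> i) a)"
  by (simp add: bang_actN_def)

lemma bang_actP_simp[simp]: "bang_actP actP \<beta> (i, a) = (i, actP (\<beta> i) a)"
  by (simp add: bang_actP_def)

lemma bang_lam_simp[simp]: "bang_lam lam ((\<pi>, \<alpha>), \<beta>) =
      ((\<lambda>i. fst (lam (\<alpha> (inv_into UNIV \<pi> i), \<beta> (inv_into UNIV \<pi> i)))),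
       (\<pi>, (\<lambda>i. snd (lam (\<alpha> i, \<beta> i)))))"
  by (simp add: bang_lam_def)

lemma ev_bangD: "(i, a) \<in> ev (bang_es A) \<Longrightarrow> a \<in> ev A"
  by simp

lemma leq_bangD: "leq (bang_es A) (i, a) (j, b) \<Longrightarrow> i = j \<and> leq A a b"
  by simp

lemma cfl_bangD: "cfl (bang_es A) (i, a) (j, b) \<Longrightarrow> i = j \<and> cfl A a b"
  by simp

lemma bang_es_ok:
  assumes "event_structure A"
  shows "event_structure (bang_es A)"
proof -
  have esRefl: "\<forall>a\<in>ev A. leq A a a"
    and esAnti: "\<forall>a\<in>ev A. \<forall>b\<in>ev A. leq A a b \<and> leq A b a \<longrightarrow> a = b"
    and esTrans: "\<forall>a\<in>ev A. \<forall>b\<in>ev A. \<forall>c\<in>ev A. leq A a b \<and> leq A b c \<longrightarrow> leq A a c"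
    and esFin: "\<forall>a\<in>ev A. finite {b\<in>ev A. leq A b a}"
    and esIrr: "\<forall>a\<in>ev A. \<not> cfl A a a"
    and esSym: "\<forall>a\<in>ev A. \<forall>b\<in>ev A. cfl A a b \<longrightarrow> cfl A b a"
    and esHer: "\<forall>a\<in>ev A. \<forall>b\<in>ev A. \<forall>c\<in>ev A. cfl A a b \<and> leq A b c \<longrightarrow> cfl A a c"
    using assms unfolding event_structure_def by blast+
  let ?B = "bang_es A"
  have fin2: "finite {b\<in>ev ?B. leq ?B b (i, a)}" if "a \<in> ev A" for i a
  proof -
    have "{b\<in>ev ?B. leq ?B b (i, a)} = {i} \<times> {b\<in>ev A. leq A b a}"
      by auto
    then show ?thesis using esFin that by simp
  qed
  have h1: "\<forall>a\<in>ev ?B. leq ?B a a"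
  proof
    fix x assume "x \<in> ev ?B"
    then obtain i a where "x = (i, a)" "a \<in> ev A" by (cases x) simp
    then show "leq ?B x x" using esRefl by simp
  qed
  have h2: "\<forall>a\<in>ev ?B. \<forall>b\<in>ev ?B. leq ?B a b \<and> leq ?B b a \<longrightarrow> a = b"
  proof (intro ballI impI)
    fix x y assume xy: "x \<in> ev ?B" "y \<in> ev ?B" "leq ?B x y \<and> leq ?B y x"
    obtain i a where x: "x = (i, a)" by (cases x)
    obtain j b where y: "y = (j, b)" by (cases y)
    have a: "a \<in> ev A" using xy(1) unfolding x by (rule ev_bangD)
    have b: "b \<in> ev A" using xy(2) unfolding y by (rule ev_bangD)
    have l1: "i = j \<and> leq A a b" using conjunct1[OF xy(3)] unfolding x y by (rule leq_bangD)
    have l2: "j = i \<and> leq A b a" using conjunct2[OF xy(3)] unfolding x y by (rule leq_bangD)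
    have "a = b" using esAnti a b l1 l2 by blast
    then show "x = y" using x y l1 by simp
  qed
  have h3: "\<forall>a\<in>ev ?B. \<forall>b\<in>ev ?B. \<forall>c\<in>ev ?B. leq ?B a b \<and> leq ?B b c \<longrightarrow> leq ?B a c"
  proof (intro ballI impI)
    fix x y z assume xyz: "x \<in> ev ?B" "y \<in> ev ?B" "z \<in> ev ?B" "leq ?B x y \<and> leq ?B y z"
    obtain i a where x: "x = (i, a)" by (cases x)
    obtain j b where y: "y = (j, b)" by (cases y)
    obtain k c where z: "z = (k, c)" by (cases z)
    have a: "a \<in> ev A" using xyz(1) unfolding x by (rule ev_bangD)
    have b: "b \<in> ev A" using xyz(2) unfolding y by (rule ev_bangD)
    have c: "c \<in> ev A" using xyz(3) unfolding z by (rule ev_bangD)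
    have l1: "i = j \<and> leq A a b" using conjunct1[OF xyz(4)] unfolding x y by (rule leq_bangD)
    have l2: "j = k \<and> leq A b c" using conjunct2[OF xyz(4)] unfolding y z by (rule leq_bangD)
    have "leq A a c" using esTrans a b c l1 l2 by blast
    then show "leq ?B x z" using x z l1 l2 by simp
  qed
  have h4: "\<forall>a\<in>ev ?B. finite {b\<in>ev ?B. leq ?B b a}"
  proof
    fix x assume "x \<in> ev ?B"
    then show "finite {b\<in>ev ?B. leq ?B b x}" using fin2 by (cases x) simp
  qed
  have h5: "\<forall>a\<in>ev ?B. \<not> cfl ?B a a"
  proof
    fix x assume "x \<in> ev ?B"
    then show "\<not> cfl ?B x x" using esIrr by (cases x) simp
  qed
  have h6: "\<forall>a\<in>ev ?B. \<forall>b\<in>ev ?B. cfl ?B a b \<longrightarrow> cfl ?B b a"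
  proof (intro ballI impI)
    fix x y assume xy: "x \<in> ev ?B" "y \<in> ev ?B" "cfl ?B x y"
    obtain i a where x: "x = (i, a)" by (cases x)
    obtain j b where y: "y = (j, b)" by (cases y)
    have a: "a \<in> ev A" using xy(1) unfolding x by (rule ev_bangD)
    have b: "b \<in> ev A" using xy(2) unfolding y by (rule ev_bangD)
    have l1: "i = j \<and> cfl A a b" using xy(3) unfolding x y by (rule cfl_bangD)
    have "cfl A b a" using esSym a b l1 by blast
    then show "cfl ?B y x" using x y l1 by simp
  qed
  have h7: "\<forall>a\<in>ev ?B. \<forall>b\<in>ev ?B. \<forall>c\<in>ev ?B. cfl ?B a b \<and> leq ?B b c \<longrightarrow> cfl ?B a c"
  proof (intro ballI impI)
    fix x y z assume xyz: "x \<in> ev ?B" "y \<in> ev ?B" "z \<in> ev ?B" "cfl ?B x y \<and> leq ?B y z"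
    obtain i a where x: "x = (i, a)" by (cases x)
    obtain j b where y: "y = (j, b)" by (cases y)
    obtain k c where z: "z = (k, c)" by (cases z)
    have a: "a \<in> ev A" using xyz(1) unfolding x by (rule ev_bangD)
    have b: "b \<in> ev A" using xyz(2) unfolding y by (rule ev_bangD)
    have c: "c \<in> ev A" using xyz(3) unfolding z by (rule ev_bangD)
    have l1: "i = j \<and> cfl A a b" using conjunct1[OF xyz(4)] unfolding x y by (rule cfl_bangD)
    have l2: "j = k \<and> leq A b c" using conjunct2[OF xyz(4)] unfolding y z by (rule leq_bangD)
    have "cfl A a c" using esHer a b c l1 l2 by blast
    then show "cfl ?B x z" using x z l1 l2 by simp
  qed
  show ?thesis unfolding event_structure_def
    using h1 h2 h3 h4 h5 h6 h7 by (intro conjI)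
qed

lemma bang_P_group:
  assumes "group P"
  shows "group (bang_P P)"
proof (rule groupI)
  interpret group P by fact
  show "\<And>x y. x \<in> carrier (bang_P P) \<Longrightarrow> y \<in> carrier (bang_P P) \<Longrightarrow> x \<otimes>\<^bsub>bang_P P\<^esub> y \<in> carrier (bang_P P)"
    by simp
  show "\<one>\<^bsub>bang_P P\<^esub> \<in> carrier (bang_P P)" by simp
  show "\<And>x y z. x \<in> carrier (bang_P P) \<Longrightarrow> y \<in> carrier (bang_P P) \<Longrightarrow> z \<in> carrier (bang_P P) \<Longrightarrow>
      x \<otimes>\<^bsub>bang_P P\<^esub> y \<otimes>\<^bsub>bang_P P\<^esub> z = x \<otimes>\<^bsub>bang_P P\<^esub> (y \<otimes>\<^bsub>bang_P P\<^esub> z)"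
    by (simp add: m_assoc)
  show "\<And>x. x \<in> carrier (bang_P P) \<Longrightarrow> \<one>\<^bsub>bang_P P\<^esub> \<otimes>\<^bsub>bang_P P\<^esub> x = x"
    by simp
  fix x assume x: "x \<in> carrier (bang_P P)"
  show "\<exists>y\<in>carrier (bang_P P). y \<otimes>\<^bsub>bang_P P\<^esub> x = \<one>\<^bsub>bang_P P\<^esub>"
    by (rule bexI[of _ "\<lambda>i. inv\<^bsub>P\<^esub> (x i)"]) (use x in auto)
qed

lemma bang_N_group:
  assumes "group N"
  shows "group (bang_N N)"
proof (rule groupI)
  interpret group N by fact
  show "\<And>x y. x \<in> carrier (bang_N N) \<Longrightarrow> y \<in> carrier (bang_N N) \<Longrightarrow> x \<otimes>\<^bsub>bang_N N\<^esub> y \<in> carrier (bang_N N)"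
    by (auto simp: bij_comp)
  show "\<one>\<^bsub>bang_N N\<^esub> \<in> carrier (bang_N N)" by simp
  show "\<And>x y z. x \<in> carrier (bang_N N) \<Longrightarrow> y \<in> carrier (bang_N N) \<Longrightarrow> z \<in> carrier (bang_N N) \<Longrightarrow>
      x \<otimes>\<^bsub>bang_N N\<^esub> y \<otimes>\<^bsub>bang_N N\<^esub> z = x \<otimes>\<^bsub>bang_N N\<^esub> (y \<otimes>\<^bsub>bang_N N\<^esub> z)"
    by (auto simp: m_assoc o_assoc)
  show "\<And>x. x \<in> carrier (bang_N N) \<Longrightarrow> \<one>\<^bsub>bang_N N\<^esub> \<otimes>\<^bsub>bang_N N\<^esub> x = x"
    by auto
  fix x assume x: "x \<in> carrier (bang_N N)"
  then obtain \<pi> \<alpha> where xe: "x = (\<pi>, \<alpha>)" and b: "bij \<pi>" and a: "\<forall>i. \<alpha> i \<in> carrier N" by auto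
  show "\<exists>y\<in>carrier (bang_N N). y \<otimes>\<^bsub>bang_N N\<^esub> x = \<one>\<^bsub>bang_N N\<^esub>"
  proof (rule bexI[of _ "(inv_into UNIV \<pi>, \<lambda>j. inv\<^bsub>N\<^esub> (\<alpha> (inv_into UNIV \<pi> j)))"])
    show "(inv_into UNIV \<pi>, \<lambda>j. inv\<^bsub>N\<^esub> (\<alpha> (inv_into UNIV \<pi> j))) \<in> carrier (bang_N N)"
      using a b by (simp add: bij_imp_bij_inv)
    have "inv_into UNIV \<pi> \<circ> \<pi> = id" using b by (simp add: bij_is_inj)
    moreover have "inv_into UNIV \<pi> (\<pi> i) = i" for i using b by (simp add: bij_is_inj)
    ultimately show "(inv_into UNIV \<pi>, \<lambda>j. inv\<^bsub>N\<^esub> (\<alpha> (inv_into UNIV \<pi> j))) \<otimes>\<^bsub>bang_N N\<^esub> x = \<one>\<^bsub>bang_N N\<^esub>"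
      using a by (simp add: xe)
  qed
qed


lemma bang_aut:
  fixes A :: "('a, 'z) evs_scheme"
  assumes b: "bij \<pi>" and f: "\<forall>i. automorphism A (f i)"
  shows "automorphism (bang_es A) (\<lambda>(i, a). (\<pi> i, f i a))"
proof -
  have inj: "inj_on (f i) (ev A)" and img: "f i ` ev A = ev A" for i
    using f unfolding automorphism_def bij_betw_def by auto
  have bb: "bij_betw (\<lambda>(i, a). (\<pi> i, f i a)) (UNIV \<times> ev A) (UNIV \<times> ev A)"
  proof (rule bij_betwI')
    fix x y :: "nat \<times> 'a" assume "x \<in> UNIV \<times> ev A" "y \<in> UNIV \<times> ev A"
    then obtain i a j c where xy: "x = (i, a)" "y = (j, c)" "a \<in> ev A" "c \<in> ev A" by auto
    have "(\<pi> i = \<pi> j \<and> f i a = f j c) = (i = j \<and> a = c)"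
      using b inj[of i] xy(3,4) by (auto simp: bij_def inj_eq dest: inj_onD)
    then show "((case x of (i, a) \<Rightarrow> (\<pi> i, f i a)) = (case y of (i, a) \<Rightarrow> (\<pi> i, f i a))) = (x = y)"
      using xy by simp
  next
    fix x :: "nat \<times> 'a" assume "x \<in> UNIV \<times> ev A"
    then show "(case x of (i, a) \<Rightarrow> (\<pi> i, f i a)) \<in> UNIV \<times> ev A" using img by auto
  next
    fix y :: "nat \<times> 'a" assume "y \<in> UNIV \<times> ev A"
    then obtain j c where y: "y = (j, c)" "c \<in> ev A" by auto
    define i where "i = inv_into UNIV \<pi> j"
    have pi: "\<pi> i = j" using b unfolding i_def by (simp add: bij_def surj_f_inv_f)
    obtain a where a: "a \<in> ev A" "c = f i a" using img[of i] y(2) by auto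
    show "\<exists>x\<in>UNIV \<times> ev A. y = (case x of (i, a) \<Rightarrow> (\<pi> i, f i a))"
      by (rule bexI[of _ "(i, a)"]) (use a pi y in auto)
  qed
  have injp: "\<pi> i = \<pi> j \<longleftrightarrow> i = j" for i j using b by (auto simp: bij_def inj_eq)
  show ?thesis unfolding automorphism_def
  proof (intro conjI)
    show "bij_betw (\<lambda>(i, a). (\<pi> i, f i a)) (ev (bang_es A)) (ev (bang_es A))" using bb by simp
    show "\<forall>a\<in>ev (bang_es A). \<forall>b\<in>ev (bang_es A).
       leq (bang_es A) (case a of (i, a) \<Rightarrow> (\<pi> i, f i a)) (case b of (i, a) \<Rightarrow> (\<pi> i, f i a)) =
       leq (bang_es A) a b"
      using f injp unfolding automorphism_def by auto
    show "\<forall>a\<in>ev (bang_es A). \<forall>b\<in>ev (bang_es A).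
       cfl (bang_es A) (case a of (i, a) \<Rightarrow> (\<pi> i, f i a)) (case b of (i, a) \<Rightarrow> (\<pi> i, f i a)) =
       cfl (bang_es A) a b"
      using f injp unfolding automorphism_def by auto
    show "\<forall>a\<in>ev (bang_es A). pos (bang_es A) (case a of (i, a) \<Rightarrow> (\<pi> i, f i a)) = pos (bang_es A) a"
      using f unfolding automorphism_def by auto
  qed
qed

lemma slice_config:
  assumes "config (bang_es A) x"
  shows "config A {a. (i, a) \<in> x}"
proof -
  have sub: "x \<subseteq> UNIV \<times> ev A" and fin: "finite x"
    and dc: "\<forall>p\<in>x. \<forall>q\<in>UNIV \<times> ev A. leq (bang_es A) q p \<longrightarrow> q \<in> x"
    and cf: "\<forall>p\<in>x. \<forall>q\<in>x. \<not> cfl (bang_es A) p q"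
    using assms unfolding config_def by auto
  have "{a. (i, a) \<in> x} = Pair i -` x" by auto
  moreover have "finite (Pair i -` x)" using fin by (rule finite_vimageI) (simp add: inj_on_def)
  ultimately have f2: "finite {a. (i, a) \<in> x}" by simp
  show ?thesis unfolding config_def
  proof (intro conjI)
    show "{a. (i, a) \<in> x} \<subseteq> ev A" using sub by auto
    show "finite {a. (i, a) \<in> x}" by (rule f2)
    show "\<forall>a\<in>{a. (i, a) \<in> x}. \<forall>b\<in>ev A. leq A b a \<longrightarrow> b \<in> {a. (i, a) \<in> x}"
    proof (intro ballI impI)
      fix a b assume "a \<in> {a. (i, a) \<in> x}" "b \<in> ev A" "leq A b a"
      then show "b \<in> {a. (i, a) \<in> x}" using dc[rule_format, of "(i, a)" "(i, b)"] by simp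
    qed
    show "\<forall>a\<in>{a. (i, a) \<in> x}. \<forall>b\<in>{a. (i, a) \<in> x}. \<not> cfl A a b"
    proof (intro ballI)
      fix a b assume "a \<in> {a. (i, a) \<in> x}" "b \<in> {a. (i, a) \<in> x}"
      then show "\<not> cfl A a b" using cf[rule_format, of "(i, a)" "(i, b)"] by simp
    qed
  qed
qed

lemma slice_ext_pos:
  assumes "ext_pos (bang_es A) x y"
  shows "ext_pos A {a. (i, a) \<in> x} {a. (i, a) \<in> y}"
proof -
  have c: "config (bang_es A) x" "config (bang_es A) y" and s: "x \<subseteq> y"
    and p: "\<forall>e\<in>y - x. pos (bang_es A) e"
    using assms unfolding ext_pos_def by auto
  have "\<forall>a\<in>{a. (i, a) \<in> y} - {a. (i, a) \<in> x}. pos A a"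
  proof
    fix a assume "a \<in> {a. (i, a) \<in> y} - {a. (i, a) \<in> x}"
    then have "(i, a) \<in> y - x" by simp
    then show "pos A a" using p[rule_format, of "(i, a)"] by simp
  qed
  then show ?thesis unfolding ext_pos_def using slice_config[OF c(1)] slice_config[OF c(2)] s by auto
qed

lemma slice_ext_neg:
  assumes "ext_neg (bang_es A) x y"
  shows "ext_neg A {a. (i, a) \<in> x} {a. (i, a) \<in> y}"
proof -
  have c: "config (bang_es A) x" "config (bang_es A) y" and s: "x \<subseteq> y"
    and p: "\<forall>e\<in>y - x. \<not> pos (bang_es A) e"
    using assms unfolding ext_neg_def by auto
  have "\<forall>a\<in>{a. (i, a) \<in> y} - {a. (i, a) \<in> x}. \<not> pos A a"
  proof
    fix a assume "a \<in> {a. (i, a) \<in> y} - {a. (i, a) \<in> x}"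
    then have "(i, a) \<in> y - x" by simp
    then show "\<not> pos A a" using p[rule_format, of "(i, a)"] by simp
  qed
  then show ?thesis unfolding ext_neg_def using slice_config[OF c(1)] slice_config[OF c(2)] s by auto
qed

lemma exists_minimal:
  assumes es: "event_structure A" and c: "config A y" and a: "a \<in> y"
  shows "\<exists>m\<in>y. \<forall>b\<in>ev A. leq A b m \<longrightarrow> b = m"
proof -
  let ?d = "\<lambda>m. card {b\<in>ev A. leq A b m}"
  obtain m where m: "m \<in> y" and mm: "\<forall>z. z \<in> y \<longrightarrow> ?d m \<le> ?d z"
    using ex_has_least_nat[of "\<lambda>m. m \<in> y" a ?d] a by blast
  have yA: "y \<subseteq> ev A" and dc: "\<forall>a\<in>y. \<forall>b\<in>ev A. leq A b a \<longrightarrow> b \<in> y"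
    using c unfolding config_def by auto
  have mA: "m \<in> ev A" using m yA by auto
  have refl: "\<forall>a\<in>ev A. leq A a a"
    and anti: "\<forall>a\<in>ev A. \<forall>b\<in>ev A. leq A a b \<and> leq A b a \<longrightarrow> a = b"
    and trans: "\<forall>a\<in>ev A. \<forall>b\<in>ev A. \<forall>c\<in>ev A. leq A a b \<and> leq A b c \<longrightarrow> leq A a c"
    and fin: "\<forall>a\<in>ev A. finite {b\<in>ev A. leq A b a}"
    using es unfolding event_structure_def by blast+
  have "\<forall>b\<in>ev A. leq A b m \<longrightarrow> b = m"
  proof (intro ballI impI)
    fix b assume bA: "b \<in> ev A" and bm: "leq A b m"
    show "b = m"
    proof (rule ccontr)
      assume ne: "b \<noteq> m"
      have bY: "b \<in> y" using dc m bA bm by blast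
      have "{c\<in>ev A. leq A c b} \<subset> {c\<in>ev A. leq A c m}"
      proof
        show "{c\<in>ev A. leq A c b} \<subseteq> {c\<in>ev A. leq A c m}"
          using trans bA mA bm by blast
        have "m \<notin> {c\<in>ev A. leq A c b}" using anti bA mA bm ne by blast
        moreover have "m \<in> {c\<in>ev A. leq A c m}" using refl mA by blast
        ultimately show "{c\<in>ev A. leq A c b} \<noteq> {c\<in>ev A. leq A c m}" by blast
      qed
      then have "?d b < ?d m" using fin mA by (simp add: psubset_card_mono)
      with mm bY show False by (meson leD)
    qed
  qed
  then show ?thesis using m by blast
qed

lemma bang_neg_aut:
  assumes es: "event_structure A"
    and minneg: "\<forall>a\<in>ev A. (\<forall>b\<in>ev A. leq A b a \<longrightarrow> b = a) \<longrightarrow> \<not> pos A a"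
    and b: "bij \<pi>" and f: "\<forall>i. negative_aut A (f i)"
  shows "negative_aut (bang_es A) (\<lambda>(i, a). (\<pi> i, f i a))"
  unfolding negative_aut_def
proof (intro conjI allI impI)
  show "automorphism (bang_es A) (\<lambda>(i, a). (\<pi> i, f i a))"
    using bang_aut[OF b] f unfolding negative_aut_def by blast
  fix x y
  assume H: "config (bang_es A) x \<and> fixes_conf (\<lambda>(i, a). (\<pi> i, f i a)) x \<and> ext_pos (bang_es A) x y"
  then have fx: "\<forall>e\<in>x. (case e of (i, a) \<Rightarrow> (\<pi> i, f i a)) = e" and ep: "ext_pos (bang_es A) x y"
    unfolding fixes_conf_def by auto
  show "fixes_conf (\<lambda>(i, a). (\<pi> i, f i a)) y"
    unfolding fixes_conf_def
  proof
    fix e assume ey: "e \<in> y"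
    obtain i a where e: "e = (i, a)" by (cases e)
    let ?xi = "{a. (i, a) \<in> x}" and ?yi = "{a. (i, a) \<in> y}"
    have epi: "ext_pos A ?xi ?yi" using slice_ext_pos[OF ep] .
    have fxi: "fixes_conf (f i) ?xi" using fx unfolding fixes_conf_def by auto
    have "fixes_conf (f i) ?yi"
      using f epi fxi unfolding negative_aut_def ext_pos_def by blast
    then have fa: "f i a = a" using ey e unfolding fixes_conf_def by auto
    have "?xi \<noteq> {}"
    proof
      assume xe: "?xi = {}"
      have cy: "config A ?yi" using epi unfolding ext_pos_def by blast
      obtain m where m: "m \<in> ?yi" and mmin: "\<forall>b\<in>ev A. leq A b m \<longrightarrow> b = m"
        using exists_minimal[OF es cy, of a] ey e by auto
      have mA: "m \<in> ev A" using cy m unfolding config_def by auto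
      have "pos A m" using epi m xe unfolding ext_pos_def by auto
      moreover have "\<not> pos A m" using minneg mA mmin by blast
      ultimately show False by simp
    qed
    then obtain c where "(i, c) \<in> x" by auto
    then have "\<pi> i = i" using fx by fastforce
    then show "(case e of (i, a) \<Rightarrow> (\<pi> i, f i a)) = e" using e fa by simp
  qed
qed

lemma bang_pos_aut:
  assumes f: "\<forall>i. positive_aut A (f i)"
  shows "positive_aut (bang_es A) (\<lambda>(i, a). (i, f i a))"
  unfolding positive_aut_def
proof (intro conjI allI impI)
  show "automorphism (bang_es A) (\<lambda>(i, a). (i, f i a))"
    using bang_aut[of id A f] f unfolding positive_aut_def by simp
  fix x y
  assume H: "config (bang_es A) x \<and> fixes_conf (\<lambda>(i, a). (i, f i a)) x \<and> ext_neg (bang_es A) x y"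
  then have fx: "\<forall>e\<in>x. (case e of (i, a) \<Rightarrow> (i, f i a)) = e" and ep: "ext_neg (bang_es A) x y"
    unfolding fixes_conf_def by auto
  show "fixes_conf (\<lambda>(i, a). (i, f i a)) y"
    unfolding fixes_conf_def
  proof
    fix e assume ey: "e \<in> y"
    obtain i a where e: "e = (i, a)" by (cases e)
    let ?xi = "{a. (i, a) \<in> x}" and ?yi = "{a. (i, a) \<in> y}"
    have epi: "ext_neg A ?xi ?yi" using slice_ext_neg[OF ep] .
    have fxi: "fixes_conf (f i) ?xi" using fx unfolding fixes_conf_def by auto
    have "fixes_conf (f i) ?yi"
      using f epi fxi unfolding positive_aut_def ext_neg_def by blast
    then have fa: "f i a = a" using ey e unfolding fixes_conf_def by auto
    then show "(case e of (i, a) \<Rightarrow> (i, f i a)) = e" using e by simp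
  qed
qed


lemma bang_actN_fun: "bang_actN actN (\<pi>, \<alpha>) = (\<lambda>(i, a). (\<pi> i, actN (\<alpha> i) a))"
  by (simp add: bang_actN_def)

lemma bang_actP_fun: "bang_actP actP \<beta> = (\<lambda>(i, a). (i, actP (\<beta> i) a))"
  by (simp add: bang_actP_def)

lemma bang_negative_action:
  assumes es: "event_structure A"
    and minneg: "\<forall>a\<in>ev A. (\<forall>b\<in>ev A. leq A b a \<longrightarrow> b = a) \<longrightarrow> \<not> pos A a"
    and na: "negative_action N A actN"
  shows "negative_action (bang_N N) (bang_es A) (bang_actN actN)"
proof -
  have la: "\<forall>g\<in>carrier N. automorphism A (actN g)"
    and l1: "\<forall>a\<in>ev A. actN (one N) a = a"
    and lm: "\<forall>g\<in>carrier N. \<forall>h\<in>carrier N. \<forall>a\<in>ev A. actN (mult N g h) a = actN g (actN h a)"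
    and ln: "\<forall>g\<in>carrier N. negative_aut A (actN g)"
    using na unfolding negative_action_def left_action_def by auto
  have NA: "negative_aut (bang_es A) (bang_actN actN g)" if g: "g \<in> carrier (bang_N N)" for g
  proof -
    obtain \<pi> \<alpha> where ge: "g = (\<pi>, \<alpha>)" and b: "bij \<pi>" and a: "\<forall>i. \<alpha> i \<in> carrier N" using g by auto
    have "\<forall>i. negative_aut A (actN (\<alpha> i))" using a ln by blast
    from bang_neg_aut[OF es minneg b this] show ?thesis by (simp add: ge bang_actN_fun)
  qed
  have "left_action (bang_N N) (bang_es A) (bang_actN actN)"
    unfolding left_action_def
  proof (intro conjI ballI)
    fix g assume "g \<in> carrier (bang_N N)"
    then show "automorphism (bang_es A) (bang_actN actN g)" using NA unfolding negative_aut_def by blast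
  next
    fix e assume "e \<in> ev (bang_es A)"
    then show "bang_actN actN \<one>\<^bsub>bang_N N\<^esub> e = e" using l1 by auto
  next
    fix g h e assume g: "g \<in> carrier (bang_N N)" and h: "h \<in> carrier (bang_N N)" and e: "e \<in> ev (bang_es A)"
    obtain \<pi> \<alpha> where ge: "g = (\<pi>, \<alpha>)" and a: "\<forall>i. \<alpha> i \<in> carrier N" using g by auto
    obtain \<pi>' \<alpha>' where he: "h = (\<pi>', \<alpha>')" and a': "\<forall>i. \<alpha>' i \<in> carrier N" using h by auto
    obtain i c where ee: "e = (i, c)" and c: "c \<in> ev A" using e by auto
    have "actN (mult N (\<alpha> (\<pi>' i)) (\<alpha>' i)) c = actN (\<alpha> (\<pi>' i)) (actN (\<alpha>' i) c)"
      using lm a a' c by blast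
    then show "bang_actN actN (g \<otimes>\<^bsub>bang_N N\<^esub> h) e = bang_actN actN g (bang_actN actN h e)"
      by (simp add: ge he ee)
  qed
  then show ?thesis unfolding negative_action_def using NA by blast
qed

lemma bang_positive_action:
  assumes pa: "positive_action P A actP"
  shows "positive_action (bang_P P) (bang_es A) (bang_actP actP)"
proof -
  have l1: "\<forall>a\<in>ev A. actP (one P) a = a"
    and lm: "\<forall>g\<in>carrier P. \<forall>h\<in>carrier P. \<forall>a\<in>ev A. actP (mult P g h) a = actP g (actP h a)"
    and lp: "\<forall>g\<in>carrier P. positive_aut A (actP g)"
    using pa unfolding positive_action_def left_action_def by auto
  have PA: "positive_aut (bang_es A) (bang_actP actP g)" if g: "g \<in> carrier (bang_P P)" for g
  proof -
    have "\<forall>i. positive_aut A (actP (g i))" using g lp by simp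
    from bang_pos_aut[OF this] show ?thesis by (simp add: bang_actP_fun)
  qed
  have "left_action (bang_P P) (bang_es A) (bang_actP actP)"
    unfolding left_action_def
  proof (intro conjI ballI)
    fix g assume "g \<in> carrier (bang_P P)"
    then show "automorphism (bang_es A) (bang_actP actP g)" using PA unfolding positive_aut_def by blast
  next
    fix e assume "e \<in> ev (bang_es A)"
    then show "bang_actP actP \<one>\<^bsub>bang_P P\<^esub> e = e" using l1 by auto
  next
    fix g h e assume g: "g \<in> carrier (bang_P P)" and h: "h \<in> carrier (bang_P P)" and e: "e \<in> ev (bang_es A)"
    obtain i c where ee: "e = (i, c)" and c: "c \<in> ev A" using e by auto
    have "actP (mult P (g i) (h i)) c = actP (g i) (actP (h i) c)"
      using lm g h c by simp
    then show "bang_actP actP (g \<otimes>\<^bsub>bang_P P\<^esub> h) e = bang_actP actP g (bang_actP actP h e)"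
      by (simp add: ee)
  qed
  then show ?thesis unfolding positive_action_def using PA by blast
qed

lemma bang_distr:
  assumes d: "distr_law N P lam"
  shows "distr_law (bang_N N) (bang_P P) (bang_lam lam)"
proof -
  have cl: "\<And>a b. a \<in> carrier N \<Longrightarrow> b \<in> carrier P \<Longrightarrow> fst (lam (a, b)) \<in> carrier P \<and> snd (lam (a, b)) \<in> carrier N"
    and u1: "\<And>a. a \<in> carrier N \<Longrightarrow> lam (a, one P) = (one P, a)"
    and u2: "\<And>b. b \<in> carrier P \<Longrightarrow> lam (one N, b) = (b, one N)"
    using d unfolding distr_law_def by auto
  have mN: "lam (mult N a a', b) = (fst (lam (a, fst (lam (a', b)))), mult N (snd (lam (a, fst (lam (a', b))))) (snd (lam (a', b))))"
    if "a \<in> carrier N" "a' \<in> carrier N" "b \<in> carrier P" for a a' b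
    using d that unfolding distr_law_def by (simp add: Let_def split_beta)
  have mP: "lam (a, mult P b b') = (mult P (fst (lam (a, b))) (fst (lam (snd (lam (a, b)), b'))), snd (lam (snd (lam (a, b)), b')))"
    if "a \<in> carrier N" "b \<in> carrier P" "b' \<in> carrier P" for a b b'
    using d that unfolding distr_law_def by (simp add: Let_def split_beta)
  show ?thesis unfolding distr_law_def
  proof (intro conjI ballI)
    fix g \<beta> assume g: "g \<in> carrier (bang_N N)" and be: "\<beta> \<in> carrier (bang_P P)"
    obtain \<pi> \<alpha> where ge: "g = (\<pi>, \<alpha>)" and b: "bij \<pi>" and a: "\<forall>i. \<alpha> i \<in> carrier N" using g by auto
    show "fst (bang_lam lam (g, \<beta>)) \<in> carrier (bang_P P)" using cl a be by (simp add: ge)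
    show "snd (bang_lam lam (g, \<beta>)) \<in> carrier (bang_N N)" using cl a be b by (simp add: ge)
  next
    fix g assume g: "g \<in> carrier (bang_N N)"
    obtain \<pi> \<alpha> where ge: "g = (\<pi>, \<alpha>)" and a: "\<forall>i. \<alpha> i \<in> carrier N" using g by auto
    show "bang_lam lam (g, \<one>\<^bsub>bang_P P\<^esub>) = (\<one>\<^bsub>bang_P P\<^esub>, g)"
      using u1 a by (simp add: ge)
  next
    fix \<beta> assume be: "\<beta> \<in> carrier (bang_P P)"
    have "inv_into UNIV id i = i" for i :: nat by (simp add: inv_into_def)
    then show "bang_lam lam (\<one>\<^bsub>bang_N N\<^esub>, \<beta>) = (\<beta>, \<one>\<^bsub>bang_N N\<^esub>)"
      using u2 be by simp
  next
    fix g g' \<beta> assume g: "g \<in> carrier (bang_N N)" and g': "g' \<in> carrier (bang_N N)" and be: "\<beta> \<in> carrier (bang_P P)"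
    obtain \<pi> \<alpha> where ge: "g = (\<pi>, \<alpha>)" and b: "bij \<pi>" and a: "\<forall>i. \<alpha> i \<in> carrier N" using g by auto
    obtain \<pi>' \<alpha>' where ge': "g' = (\<pi>', \<alpha>')" and b': "bij \<pi>'" and a': "\<forall>i. \<alpha>' i \<in> carrier N" using g' by auto
    have bv: "\<forall>i. \<beta> i \<in> carrier P" using be by simp
    have invc: "inv_into UNIV (\<pi> \<circ> \<pi>') = inv_into UNIV \<pi>' \<circ> inv_into UNIV \<pi>" using b b' by (rule o_inv_distrib)
    have i1: "inv_into UNIV \<pi>' (\<pi>' i) = i" for i using b' by (simp add: bij_is_inj)
    have i2: "\<pi>' (inv_into UNIV \<pi>' j) = j" for j using b' by (simp add: bij_is_surj surj_f_inv_f)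
    have c1: "fst (lam (\<alpha> (\<pi>' (inv_into UNIV \<pi>' (inv_into UNIV \<pi> i))) \<otimes>\<^bsub>N\<^esub> \<alpha>' (inv_into UNIV \<pi>' (inv_into UNIV \<pi> i)),
                    \<beta> (inv_into UNIV \<pi>' (inv_into UNIV \<pi> i))))
           = fst (lam (\<alpha> (inv_into UNIV \<pi> i), fst (lam (\<alpha>' (inv_into UNIV \<pi>' (inv_into UNIV \<pi> i)), \<beta> (inv_into UNIV \<pi>' (inv_into UNIV \<pi> i))))))" for i
      using mN a a' bv i2 by simp
    have c2: "snd (lam (\<alpha> (\<pi>' i) \<otimes>\<^bsub>N\<^esub> \<alpha>' i, \<beta> i)) =
       snd (lam (\<alpha> (\<pi>' i), fst (lam (\<alpha>' (inv_into UNIV \<pi>' (\<pi>' i)), \<beta> (inv_into UNIV \<pi>' (\<pi>' i)))))) \<otimes>\<^bsub>N\<^esub> snd (lam (\<alpha>' i, \<beta> i))" for i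
      using mN a a' bv i1 by simp
    show "bang_lam lam (g \<otimes>\<^bsub>bang_N N\<^esub> g', \<beta>) =
          (let (\<beta>1, \<alpha>1) = bang_lam lam (g', \<beta>); (\<beta>2, \<alpha>2) = bang_lam lam (g, \<beta>1) in (\<beta>2, \<alpha>2 \<otimes>\<^bsub>bang_N N\<^esub> \<alpha>1))"
      by (simp add: ge ge' Let_def invc c1 c2)
  next
    fix g \<beta> \<beta>' assume g: "g \<in> carrier (bang_N N)" and be: "\<beta> \<in> carrier (bang_P P)" and be': "\<beta>' \<in> carrier (bang_P P)"
    obtain \<pi> \<alpha> where ge: "g = (\<pi>, \<alpha>)" and b: "bij \<pi>" and a: "\<forall>i. \<alpha> i \<in> carrier N" using g by auto
    have bv: "\<forall>i. \<beta> i \<in> carrier P" "\<forall>i. \<beta>' i \<in> carrier P" using be be' by auto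
    show "bang_lam lam (g, \<beta> \<otimes>\<^bsub>bang_P P\<^esub> \<beta>') =
          (let (\<beta>1, \<alpha>1) = bang_lam lam (g, \<beta>); (\<beta>2, \<alpha>2) = bang_lam lam (\<alpha>1, \<beta>') in (\<beta>1 \<otimes>\<^bsub>bang_P P\<^esub> \<beta>2, \<alpha>2))"
      using mP a bv by (simp add: ge Let_def)
  qed
qed

lemma bang_interchange:
  assumes ic: "\<forall>\<alpha>\<in>carrier N. \<forall>\<beta>\<in>carrier P. \<forall>a\<in>ev A.
        actN \<alpha> (actP \<beta> a) = actP (fst (lam (\<alpha>, \<beta>))) (actN (snd (lam (\<alpha>, \<beta>))) a)"
  shows "\<forall>\<alpha>\<in>carrier (bang_N N). \<forall>\<beta>\<in>carrier (bang_P P). \<forall>a\<in>ev (bang_es A).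
        bang_actN actN \<alpha> (bang_actP actP \<beta> a) =
        bang_actP actP (fst (bang_lam lam (\<alpha>, \<beta>))) (bang_actN actN (snd (bang_lam lam (\<alpha>, \<beta>))) a)"
proof (intro ballI)
  fix g \<beta> e assume g: "g \<in> carrier (bang_N N)" and be: "\<beta> \<in> carrier (bang_P P)" and e: "e \<in> ev (bang_es A)"
  obtain \<pi> \<alpha> where ge: "g = (\<pi>, \<alpha>)" and b: "bij \<pi>" and a: "\<forall>i. \<alpha> i \<in> carrier N" using g by auto
  obtain i c where ee: "e = (i, c)" and c: "c \<in> ev A" using e by auto
  have i1: "inv_into UNIV \<pi> (\<pi> i) = i" using b by (simp add: bij_is_inj)
  have "actN (\<alpha> i) (actP (\<beta> i) c) = actP (fst (lam (\<alpha> i, \<beta> i))) (actN (snd (lam (\<alpha> i, \<beta> i))) c)"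
    using ic a be c by simp
  then show "bang_actN actN g (bang_actP actP \<beta> e) =
        bang_actP actP (fst (bang_lam lam (g, \<beta>))) (bang_actN actN (snd (bang_lam lam (g, \<beta>))) e)"
    by (simp add: ge ee i1)
qed

theorem mainTheorem3:
  fixes A :: "('a, 'z) evs_scheme"
    and N :: "('n, 'b) monoid_scheme" and actN :: "'n \<Rightarrow> 'a \<Rightarrow> 'a"
    and P :: "('p, 'c) monoid_scheme" and actP :: "'p \<Rightarrow> 'a \<Rightarrow> 'a"
    and lam :: "'n \<times> 'p \<Rightarrow> 'p \<times> 'n"
  assumes "negative_game A N actN P actP lam"
  shows "game (bang_es A) (bang_N N) (bang_actN actN) (bang_P P) (bang_actP actP) (bang_lam lam)"
proof -
  have es: "event_structure A" and gN: "group N" and gP: "group P"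
    and na: "negative_action N A actN" and pa: "positive_action P A actP"
    and d: "distr_law N P lam"
    and ic: "\<forall>\<alpha>\<in>carrier N. \<forall>\<beta>\<in>carrier P. \<forall>a\<in>ev A.
        actN \<alpha> (actP \<beta> a) = actP (fst (lam (\<alpha>, \<beta>))) (actN (snd (lam (\<alpha>, \<beta>))) a)"
    and mn: "\<forall>a\<in>ev A. (\<forall>b\<in>ev A. leq A b a \<longrightarrow> b = a) \<longrightarrow> \<not> pos A a"
    using assms unfolding negative_game_def game_def by auto
  show ?thesis unfolding game_def
    using bang_es_ok[OF es] bang_N_group[OF gN] bang_P_group[OF gP]
      bang_negative_action[OF es mn na] bang_positive_action[OF pa] bang_distr[OF d]
      bang_interchange[OF ic] by blast
qed

end
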